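(* Let $G$ be a connected graph with $|V(G)|\ge 3$ and $L(G)=2l(G)$. For any maximum matchings $F_L,F_l$ of $G$ with $\nu(G\setminus F_L)=L(G)$ and $\nu(G\setminus F_l)=l(G)$, every vertex of $G$ is covered by an edge of $F_L$ or by an edge of $F_l$, i.e. $V(F_L)\cup V(F_l)=V(G)$.
   Context: Graphs are finite, undirected, without loops or multiple edges. $\nu(G)$ denotes the maximum size of a matching of $G$; a matching is maximum if it has $\nu(G)$ edges. For $F\subseteq E(G)$, $G\setminus F$ is the graph with vertex set $V(G)$ and edge set $E(G)\setminus F$, and $V(F)$ is the set of vertices incident to some edge of $F$. Define $L(G)=\max\{\nu(G\setminus F): F \text{ a maximum matching of } G\}$ and $l(G)=\min\{\nu(G\setminus F): F \text{ a maximum matching of } G\}$. *)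

theory Defs
  imports Main
begin

definition simple_graph :: "'a set \<Rightarrow> 'a set set \<Rightarrow> bool" where
  "simple_graph V E \<longleftrightarrow> finite V \<and>
     (\<forall>e\<in>E. \<exists>u v. e = {u, v} \<and> u \<noteq> v \<and> u \<in> V \<and> v \<in> V)"

definition adj_rel :: "'a set set \<Rightarrow> ('a \<times> 'a) set" where
  "adj_rel E = {(x, y). {x, y} \<in> E}"

definition connected_graph :: "'a set \<Rightarrow> 'a set set \<Rightarrow> bool" where
  "connected_graph V E \<longleftrightarrow> (\<forall>u\<in>V. \<forall>v\<in>V. (u, v) \<in> (adj_rel E)\<^sup>*)"

definition matching :: "'a set set \<Rightarrow> 'a set set \<Rightarrow> bool" where
  "matching E M \<longleftrightarrow> M \<subseteq> E \<and> (\<forall>e1\<in>M. \<forall>e2\<in>M. e1 \<noteq> e2 \<longrightarrow> e1 \<inter> e2 = {})"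

text \<open>matching number \<nu>(G) (the graph G \<setminus> F has the same vertex set and
  edge set E - F; matchings do not depend on the vertex set).\<close>
definition nu :: "'a set set \<Rightarrow> nat" where
  "nu E = Max {card M | M. matching E M}"

definition max_matching :: "'a set set \<Rightarrow> 'a set set \<Rightarrow> bool" where
  "max_matching E M \<longleftrightarrow> matching E M \<and> card M = nu E"

definition L_num :: "'a set set \<Rightarrow> nat" where
  "L_num E = Max {nu (E - F) | F. max_matching E F}"

definition l_num :: "'a set set \<Rightarrow> nat" where
  "l_num E = Min {nu (E - F) | F. max_matching E F}"

definition covered :: "'a set set \<Rightarrow> 'a set" where
  "covered F = \<Union>F"

end

theory Submission
  imports Defs
begin

lemma sg_edge: "simple_graph V E \<Longrightarrow> e \<in> E \<Longrightarrow> \<exists>a b. e = {a,b} \<and> a \<noteq> b \<and> a \<in> V \<and> b \<in> V"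
  unfolding simple_graph_def by blast

lemma sg_sub: "simple_graph V E \<Longrightarrow> e \<in> E \<Longrightarrow> e \<subseteq> V"
  using sg_edge by fastforce

lemma sg_fin: "simple_graph V E \<Longrightarrow> finite E"
proof -
  assume s: "simple_graph V E"
  hence "E \<subseteq> Pow V" using sg_sub by blast
  moreover have "finite V" using s unfolding simple_graph_def by simp
  ultimately show ?thesis using finite_subset by blast
qed

lemma nu_ge:
  assumes "finite E" "matching E M" shows "card M \<le> nu E"
proof -
  have "{card M | M. matching E M} \<subseteq> {0..card E}"
  proof
    fix k assume "k \<in> {card M | M. matching E M}"
    then obtain M' where "matching E M'" "k = card M'" by blast
    hence "M' \<subseteq> E" "k = card M'" unfolding matching_def by auto
    thus "k \<in> {0..card E}" using card_mono[OF assms(1)] by simp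
  qed
  hence "finite {card M | M. matching E M}" using finite_subset by blast
  thus ?thesis unfolding nu_def using assms(2) by (intro Max_ge) auto
qed

lemma matching_Diff: "matching (E - F) M \<longleftrightarrow> matching E M \<and> M \<inter> F = {}"
  unfolding matching_def by blast

lemma matching_fin: "finite E \<Longrightarrow> matching E M \<Longrightarrow> finite M"
  unfolding matching_def using finite_subset by blast

lemma nu_ex:
  assumes "finite E" shows "\<exists>M. matching E M \<and> card M = nu E"
proof -
  have "{card M | M. matching E M} \<subseteq> {0..card E}"
  proof
    fix k assume "k \<in> {card M | M. matching E M}"
    then obtain M' where "matching E M'" "k = card M'" by blast
    hence "M' \<subseteq> E" "k = card M'" unfolding matching_def by auto
    thus "k \<in> {0..card E}" using card_mono[OF assms(1)] by simp
  qed
  hence "finite {card M | M. matching E M}" using finite_subset by blast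
  moreover have "matching E {}" unfolding matching_def by auto
  ultimately have "nu E \<in> {card M | M. matching E M}" unfolding nu_def
    by (intro Max_in) auto
  thus ?thesis by auto
qed

lemma matching_ins:
  assumes "matching E M" "e \<in> E" "\<forall>m\<in>M. m \<inter> e = {}" "e \<noteq> {}"
  shows "matching E (insert e M)"
  using assms unfolding matching_def by blast

lemma card_ins_aux:
  assumes "finite M" "\<forall>m\<in>M. m \<inter> e = {}" "e \<noteq> {}"
  shows "card (insert e M) = card M + 1"
proof -
  have "e \<notin> M" using assms by blast
  thus ?thesis using assms by simp
qed

theorem claim1:
  fixes V :: "'a set" and E :: "'a set set" and FL Fl :: "'a set set"
  assumes "simple_graph V E"
    and "connected_graph V E"
    and "card V \<ge> 3"
    and "L_num E = 2 * l_num E"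
    and "max_matching E FL" and "nu (E - FL) = L_num E"
    and "max_matching E Fl" and "nu (E - Fl) = l_num E"
  shows "covered FL \<union> covered Fl = V"
proof -
  note sg = assms(1)
  have finE: "finite E" using sg_fin[OF sg] .
  define l where "l = l_num E"
  define n where "n = nu E"
  have nuL: "nu (E - FL) = 2 * l" using assms(4,6) l_def by simp
  have nul: "nu (E - Fl) = l" using assms(8) l_def by simp
  have mFL: "matching E FL" and cFL: "card FL = n" using assms(5) n_def max_matching_def by auto
  have mFl: "matching E Fl" and cFl: "card Fl = n" using assms(7) n_def max_matching_def by auto
  have finFL: "finite FL" using matching_fin[OF finE mFL] .
  have finFl: "finite Fl" using matching_fin[OF finE mFl] .
  have finEFl: "finite (E - Fl)" using finE by simp
  obtain M where mM: "matching (E - FL) M" and cM: "card M = 2 * l"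
    using nu_ex[of "E - FL"] finE nuL by auto
  have finM: "finite M" using mM finE by (meson finite_Diff matching_fin)
  have MFL: "M \<inter> FL = {}" and mME: "matching E M" using mM matching_Diff by auto
  define Q where "Q = M - Fl"
  define A where "A = FL - Fl"
  have mQ: "matching (E - Fl) Q" using mME unfolding Q_def matching_def by blast
  have mA: "matching (E - Fl) A" using mFL unfolding A_def matching_def by blast
  have cQl: "card Q \<le> l" using nu_ge[OF finEFl mQ] nul by simp
  have cAl: "card A \<le> l" using nu_ge[OF finEFl mA] nul by simp
  have cQ: "card Q = 2 * l - card (M \<inter> Fl)" unfolding Q_def
    using finM cM by (simp add: card_Diff_subset_Int)
  have cA: "card A = n - card (FL \<inter> Fl)" unfolding A_def
    using finFL cFL by (simp add: card_Diff_subset_Int)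
  have disj: "(M \<inter> Fl) \<inter> (FL \<inter> Fl) = {}" using MFL by blast
  have cun: "card ((M \<inter> Fl) \<union> (FL \<inter> Fl)) = card (M \<inter> Fl) + card (FL \<inter> Fl)"
    using disj finM finFL by (simp add: card_Un_disjoint)
  have sub: "(M \<inter> Fl) \<union> (FL \<inter> Fl) \<subseteq> Fl" by blast
  have cle: "card ((M \<inter> Fl) \<union> (FL \<inter> Fl)) \<le> n" using card_mono[OF finFl sub] cFl by simp
  have m1: "card (M \<inter> Fl) \<le> 2 * l" using cM finM by (metis Int_lower1 card_mono)
  have c2: "card (FL \<inter> Fl) \<le> n" using cFL finFL by (metis Int_lower1 card_mono)
  have cQeq: "card Q = l" and cAeq: "card A = l" and sumeq: "card ((M \<inter> Fl) \<union> (FL \<inter> Fl)) = n"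
  proof -
    have e1: "card Q + card (M \<inter> Fl) = 2 * l" using cQ m1 by simp
    have e2: "card A + card (FL \<inter> Fl) = n" using cA c2 by simp
    show "card Q = l" using e1 e2 cQl cAl cun cle by linarith
    show "card A = l" using e1 e2 cQl cAl cun cle by linarith
    show "card ((M \<inter> Fl) \<union> (FL \<inter> Fl)) = n" using e1 e2 cQl cAl cun cle by linarith
  qed
  have FlEq: "(M \<inter> Fl) \<union> (FL \<inter> Fl) = Fl"
    using card_subset_eq[OF finFl sub] sumeq cFl by simp
  hence BM: "Fl - FL \<subseteq> M" by blast
  show ?thesis
  proof
    show "covered FL \<union> covered Fl \<subseteq> V"
    proof -
      have EV: "\<forall>e\<in>E. e \<subseteq> V" using sg_sub[OF sg] by blast
      have "FL \<subseteq> E" "Fl \<subseteq> E" using mFL mFl unfolding matching_def by auto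
      thus ?thesis using EV unfolding covered_def by blast
    qed
  next
    show "V \<subseteq> covered FL \<union> covered Fl"
    proof
      fix v assume vV: "v \<in> V"
      show "v \<in> covered FL \<union> covered Fl"
      proof (rule ccontr)
        assume "v \<notin> covered FL \<union> covered Fl"
        hence vFL: "\<forall>e\<in>FL. v \<notin> e" and vFl: "\<forall>e\<in>Fl. v \<notin> e" unfolding covered_def by auto
        have "\<exists>t\<in>V. t \<noteq> v"
        proof (rule ccontr)
          assume "\<not> (\<exists>t\<in>V. t \<noteq> v)"
          hence "V \<subseteq> {v}" by blast
          hence "card V \<le> 1" using card_mono[of "{v}" V] by simp
          thus False using assms(3) by simp
        qed
        then obtain t where tV: "t \<in> V" and tv: "t \<noteq> v" by blast
        have "(v, t) \<in> (adj_rel E)\<^sup>*" using assms(2) vV tV unfolding connected_graph_def by blast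
        then obtain u where "(v, u) \<in> adj_rel E" using tv by (metis converse_rtranclE)
        hence uvE: "{v, u} \<in> E" unfolding adj_rel_def by simp
        define uv where "uv = {v, u}"
        have uvne: "uv \<noteq> {}" unfolding uv_def by simp
        have uvFL: "uv \<notin> FL" using vFL uv_def by auto
        have uvFl: "uv \<notin> Fl" using vFl uv_def by auto
        have "\<exists>f\<in>Fl. u \<in> f"
        proof (rule ccontr)
          assume nu': "\<not> (\<exists>f\<in>Fl. u \<in> f)"
          have "\<forall>m\<in>Fl. m \<inter> uv = {}" using nu' vFl uv_def by blast
          hence "matching E (insert uv Fl)" and "card (insert uv Fl) = n + 1"
            using matching_ins[OF mFl] card_ins_aux[OF finFl] uvE uvne uv_def cFl by auto
          thus False using nu_ge[OF finE, of "insert uv Fl"] n_def by simp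
        qed
        then obtain f where fFl: "f \<in> Fl" and uf: "u \<in> f" by blast
        show False
        proof (cases "f \<in> FL")
          case True
          have "\<forall>m\<in>A. m \<inter> uv = {}"
          proof
            fix m assume mA': "m \<in> A"
            hence "m \<in> FL" "m \<noteq> f" using fFl A_def by auto
            hence "m \<inter> f = {}" using mFL True unfolding matching_def by blast
            thus "m \<inter> uv = {}" using uf vFL \<open>m \<in> FL\<close> uv_def by auto
          qed
          moreover have "finite A" using finFL A_def by simp
          ultimately have "matching (E - Fl) (insert uv A)" and "card (insert uv A) = l + 1"
            using matching_ins[OF mA] card_ins_aux uvE uvne uvFl uv_def cAeq by auto
          thus False using nu_ge[OF finEFl, of "insert uv A"] nul by simp
        next
          case False
          hence fM: "f \<in> M" using BM fFl by blast
          have uQ: "\<forall>q\<in>Q. u \<notin> q"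
          proof
            fix q assume "q \<in> Q"
            hence "q \<in> M" "q \<noteq> f" using fFl Q_def by auto
            hence "q \<inter> f = {}" using mME fM unfolding matching_def by blast
            thus "u \<notin> q" using uf by blast
          qed
          have finQ: "finite Q" using finM Q_def by simp
          show False
          proof (cases "\<exists>g\<in>Q. v \<in> g")
            case False
            hence "\<forall>m\<in>Q. m \<inter> uv = {}" using uQ uv_def by blast
            hence "matching (E - Fl) (insert uv Q)" and "card (insert uv Q) = l + 1"
              using matching_ins[OF mQ] card_ins_aux[OF finQ] uvE uvne uvFl uv_def cQeq by auto
            thus False using nu_ge[OF finEFl, of "insert uv Q"] nul by simp
          next
            case True
            then obtain g where gQ: "g \<in> Q" and vg: "v \<in> g" by blast
            have finA: "finite A" using finFL A_def by simp
            have K: "\<forall>q\<in>Q. q \<inter> \<Union>A \<noteq> {}"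
            proof
              fix q assume qQ: "q \<in> Q"
              show "q \<inter> \<Union>A \<noteq> {}"
              proof
                assume dq: "q \<inter> \<Union>A = {}"
                have qE: "q \<in> E - Fl" using mQ qQ unfolding matching_def by blast
                have qne: "q \<noteq> {}" using sg_edge[OF sg] qE by blast
                have "\<forall>m\<in>A. m \<inter> q = {}" using dq by blast
                hence "matching (E - Fl) (insert q A)" and "card (insert q A) = l + 1"
                  using matching_ins[OF mA] card_ins_aux[OF finA] qE qne cAeq by auto
                thus False using nu_ge[OF finEFl, of "insert q A"] nul by simp
              qed
            qed
            define T where "T = {t \<in> Fl. \<exists>q\<in>Q. t \<inter> q \<noteq> {}}"
            have TFL: "T \<subseteq> FL"
            proof
              fix t assume tT: "t \<in> T"
              show "t \<in> FL"
              proof (rule ccontr)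
                assume "t \<notin> FL"
                hence tM: "t \<in> M" using BM tT T_def by blast
                obtain q where "q \<in> Q" "t \<inter> q \<noteq> {}" using tT T_def by blast
                moreover have "q \<in> M" "q \<noteq> t" using \<open>q \<in> Q\<close> tT Q_def T_def by auto
                ultimately show False using mME tM unfolding matching_def by blast
              qed
            qed
            have TA: "\<forall>t\<in>T. t \<inter> \<Union>A = {}"
            proof
              fix t assume tT: "t \<in> T"
              have "\<forall>a\<in>A. a \<inter> t = {}"
              proof
                fix a assume "a \<in> A"
                hence "a \<in> FL" "a \<noteq> t" using tT A_def T_def by auto
                thus "a \<inter> t = {}" using mFL TFL tT unfolding matching_def by blast
              qed
              thus "t \<inter> \<Union>A = {}" by blast
            qed
            define \<phi> where "\<phi> t = (SOME q. q \<in> Q \<and> t \<inter> q \<noteq> {})" for t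
            have phi: "\<phi> t \<in> Q \<and> t \<inter> \<phi> t \<noteq> {}" if "t \<in> T" for t
              unfolding \<phi>_def by (rule someI_ex) (use that T_def in blast)
            have twoQ: "\<exists>a b. q = {a, b}" if "q \<in> Q" for q
            proof -
              have "Q \<subseteq> E - Fl" using mQ unfolding matching_def by simp
              hence "q \<in> E" using that by blast
              thus ?thesis using sg_edge[OF sg] by blast
            qed
            have phig: "\<phi> t \<noteq> g" if tT: "t \<in> T" for t
            proof
              assume eq: "\<phi> t = g"
              then obtain z where zt: "z \<in> t" and zg: "z \<in> g" using phi[OF tT] by blast
              have "z \<noteq> v" using vFl zt tT T_def by blast
              obtain a b where gab: "g = {a, b}" using twoQ gQ by blast
              have "g = {v, z}" using gab vg zg \<open>z \<noteq> v\<close> by auto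
              moreover have "v \<notin> \<Union>A" using vFL A_def by blast
              moreover have "z \<notin> \<Union>A" using TA tT zt by blast
              ultimately have "g \<inter> \<Union>A = {}" by blast
              thus False using K gQ by blast
            qed
            have inj: "inj_on \<phi> T"
            proof (rule inj_onI)
              fix t1 t2 assume t1: "t1 \<in> T" and t2: "t2 \<in> T" and eq: "\<phi> t1 = \<phi> t2"
              show "t1 = t2"
              proof (rule ccontr)
                assume ne: "t1 \<noteq> t2"
                have dt: "t1 \<inter> t2 = {}" using mFl t1 t2 ne T_def unfolding matching_def by blast
                define q where "q = \<phi> t1"
                have qQ: "q \<in> Q" using phi[OF t1] q_def by simp
                obtain z1 where z1: "z1 \<in> t1" "z1 \<in> q" using phi[OF t1] q_def by blast
                obtain z2 where z2: "z2 \<in> t2" "z2 \<in> q" using phi[OF t2] q_def eq by blast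
                have "z1 \<noteq> z2" using dt z1 z2 by blast
                obtain a b where qab: "q = {a, b}" using twoQ qQ by blast
                have "q = {z1, z2}" using qab z1 z2 \<open>z1 \<noteq> z2\<close> by auto
                moreover have "z1 \<notin> \<Union>A" using TA t1 z1 by blast
                moreover have "z2 \<notin> \<Union>A" using TA t2 z2 by blast
                ultimately have "q \<inter> \<Union>A = {}" by blast
                thus False using K qQ by blast
              qed
            qed
            have "\<phi> ` T \<subseteq> Q - {g}" using phi phig by blast
            hence cT: "card T \<le> card (Q - {g})"
              using card_inj_on_le[OF inj] finQ by blast
            have cQg: "card (Q - {g}) = l - 1" using gQ finQ cQeq by simp
            have l1: "l \<ge> 1" proof -
              have "Q \<noteq> {}" using gQ by blast
              hence "card Q > 0" using finQ card_gt_0_iff by blast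
              thus ?thesis using cQeq by simp
            qed
            define N where "N = Q \<union> (Fl - T)"
            have mN: "matching E N"
              unfolding matching_def
            proof (intro conjI ballI impI)
              show "N \<subseteq> E" using mQ mFl unfolding N_def matching_def by blast
            next
              fix e1 e2 assume e1: "e1 \<in> N" and e2: "e2 \<in> N" and ne: "e1 \<noteq> e2"
              have QQ: "\<forall>a\<in>Q. \<forall>b\<in>Q. a \<noteq> b \<longrightarrow> a \<inter> b = {}" using mQ unfolding matching_def by blast
              have FF: "\<forall>a\<in>Fl. \<forall>b\<in>Fl. a \<noteq> b \<longrightarrow> a \<inter> b = {}" using mFl unfolding matching_def by blast
              have QT: "\<forall>a\<in>Q. \<forall>b\<in>Fl - T. a \<inter> b = {}" unfolding T_def by blast
              show "e1 \<inter> e2 = {}"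
                using e1 e2 ne QQ FF QT unfolding N_def by blast
            qed
            have finT: "finite T" using finFl T_def by simp
            have QFl: "Q \<inter> (Fl - T) = {}" using Q_def by blast
            have "card N = card Q + card (Fl - T)"
              unfolding N_def using QFl finQ finFl by (simp add: card_Un_disjoint)
            moreover have "card (Fl - T) = n - card T"
              using finT cFl T_def by (simp add: card_Diff_subset)
            moreover have "card T \<le> n" proof -
              have "T \<subseteq> Fl" unfolding T_def by blast
              thus ?thesis using card_mono[OF finFl] cFl by simp
            qed
            ultimately have "card N = n + 1 + (l - 1 - card T)"
              using cT cQg cQeq l1 by linarith
            hence "card N > n" by simp
            thus False using nu_ge[OF finE mN] n_def by simp
          qed
        qed
      qed
    qed
  qed
qed

end
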